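(* Let $p$ be an odd prime, $m\ge1$, $Q=T_{(p^m)}$ and $K=K_Q(p)$, and let $\phi=\phi_1$ be the map on $K$ defined below. If $S_\xi,S_{\xi'}\in Q$ satisfy $S_\xi^p\in Z(K)$ and $S_{\xi'}^p\in Z(K)$, then $\phi(S_\xi S_{\xi'})=\phi(S_\xi)\phi(S_{\xi'})$.
   Context: Let $\omega=e^{2\pi i/p}$, $\{|q\rangle:q\in\mathbb{Z}_p\}$ the computational basis of $\mathbb{C}^p$, $X|q\rangle=|q+1\rangle$. For $\xi:\mathbb{Z}_p\to U(1)$ let $S_\xi=\mathrm{diag}(\xi(0),\dots,\xi(p-1))$. $T=\{S_\xi:\prod_{q}\xi(q)=1\}$, $T_{(p^k)}=\{S\in T:S^{p^k}=\mathbbm{1}\}$. $K_Q(p)$ is the subgroup of $SU(p)$ generated by all $S_\xi X^b$, $S_\xi\in Q$, $b\in\mathbb{Z}_p$; each element is uniquely $S_\xi X^b$, written $(\xi,b)$. $Z(K)$ is the center of $K$. Every $S_\xi\in T_{(p^m)}$ has a unique expansion $\xi(q)=\exp\big(\sum_{j=1}^m\frac{2\pi i}{p^j}\sum_{a=0}^{p-1}\vartheta_{j,a}q^a\big)$ with $\vartheta_{j,a}\in\{0,\dots,p-1\}$ (set $\vartheta_{2,0}=0$ if $m=1$). Define $R(\xi)$ and $P(\xi)$ as the functions $R(\xi)(q)=\omega^{\vartheta_{1,0}+\vartheta_{1,1}q}e^{2\pi i\vartheta_{2,0}/p^2}$ and $P(\xi)(q)=\omega^{\vartheta_{1,0}+\vartheta_{1,1}q}$.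 Define $\phi_1:K\to U(p)$ by $\phi_1(S_\xi)=S_{R(\xi)}$, $\phi_1(S_\xi X)=S_{P(\xi)}X$, and for $2\le b\le p-1$, $\phi_1(M)=\phi_1(M^{y})^{b}$ where $M=S_\xi X^b$ and $y\in\{1,\dots,p-1\}$ with $yb\equiv1\bmod p$ (so $M^y$ has $X$-exponent $1$). *)

theory Defs
  imports Complex_Main "Jordan_Normal_Form.Matrix"
begin

text \<open>Operators on C^p are p x p complex matrices (JNF); the computational basis
  |q>, q in Z_p, is indexed by q in {0..<p}; functions xi : Z_p -> U(1) are
  represented by functions nat => complex, only their values on {0..<p} matter.\<close>

definition omega :: "nat \<Rightarrow> complex" where
  "omega p = exp (2 * pi * \<i> / of_nat p)"

definition Xm :: "nat \<Rightarrow> complex mat" where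
  "Xm p = mat p p (\<lambda>(r, q). if r = (q + 1) mod p then 1 else 0)"

definition Sm :: "nat \<Rightarrow> (nat \<Rightarrow> complex) \<Rightarrow> complex mat" where
  "Sm p \<xi> = mat p p (\<lambda>(r, q). if r = q then \<xi> r else 0)"

definition Tset :: "nat \<Rightarrow> complex mat set" where
  "Tset p = {Sm p \<xi> | \<xi>. (\<forall>q<p. norm (\<xi> q) = 1) \<and> (\<Prod>q<p. \<xi> q) = 1}"

definition Tpow :: "nat \<Rightarrow> nat \<Rightarrow> complex mat set" where
  "Tpow p k = {S \<in> Tset p. S ^\<^sub>m (p ^ k) = 1\<^sub>m p}"

inductive_set Kgrp :: "nat \<Rightarrow> complex mat set \<Rightarrow> complex mat set" for p Q where
  gen: "S \<in> Q \<Longrightarrow> b < p \<Longrightarrow> S * (Xm p ^\<^sub>m b) \<in> Kgrp p Q"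
| mult: "A \<in> Kgrp p Q \<Longrightarrow> B \<in> Kgrp p Q \<Longrightarrow> A * B \<in> Kgrp p Q"
| inv: "A \<in> Kgrp p Q \<Longrightarrow> B \<in> carrier_mat p p \<Longrightarrow> A * B = 1\<^sub>m p \<Longrightarrow> B \<in> Kgrp p Q"

definition center :: "complex mat set \<Rightarrow> complex mat set" where
  "center K = {A \<in> K. \<forall>B \<in> K. A * B = B * A}"

text \<open>The (unique) coefficients theta_{j,a} (j in {1..m}, a in {0..p-1}) of the expansion
  xi(q) = exp(sum_{j=1}^m 2 pi i / p^j sum_{a=0}^{p-1} theta_{j,a} q^a) for q in {0..<p}
  (q^a computed with the representative q in {0..p-1}, 0^0 = 1).
  theta is 0 outside the index range, so theta_{2,0} = 0 when m = 1.\<close>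
definition theta :: "nat \<Rightarrow> nat \<Rightarrow> (nat \<Rightarrow> complex) \<Rightarrow> nat \<Rightarrow> nat \<Rightarrow> nat" where
  "theta p m \<xi> = (THE \<theta>.
     (\<forall>j a. \<theta> j a < p) \<and>
     (\<forall>j a. (j \<notin> {1..m} \<or> a \<ge> p) \<longrightarrow> \<theta> j a = 0) \<and>
     (\<forall>q<p. \<xi> q = exp (\<Sum>j\<in>{1..m}. (2 * pi * \<i> / of_nat (p ^ j)) *
                            (\<Sum>a<p. of_nat (\<theta> j a) * of_nat (q ^ a)))))"

definition Rfun :: "nat \<Rightarrow> nat \<Rightarrow> (nat \<Rightarrow> complex) \<Rightarrow> nat \<Rightarrow> complex" where
  "Rfun p m \<xi> = (\<lambda>q. omega p ^ (theta p m \<xi> 1 0 + theta p m \<xi> 1 1 * q) *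
                      exp (2 * pi * \<i> * of_nat (theta p m \<xi> 2 0) / of_nat (p ^ 2)))"

definition Pfun :: "nat \<Rightarrow> nat \<Rightarrow> (nat \<Rightarrow> complex) \<Rightarrow> nat \<Rightarrow> complex" where
  "Pfun p m \<xi> = (\<lambda>q. omega p ^ (theta p m \<xi> 1 0 + theta p m \<xi> 1 1 * q))"

definition xexp :: "nat \<Rightarrow> complex mat \<Rightarrow> nat" where
  "xexp p M = (THE b. b < p \<and> (\<exists>\<xi>. M = Sm p \<xi> * (Xm p ^\<^sub>m b)))"

definition dpart :: "nat \<Rightarrow> complex mat \<Rightarrow> nat \<Rightarrow> complex" where
  "dpart p M = (SOME \<xi>. M = Sm p \<xi> * (Xm p ^\<^sub>m xexp p M))"

definition phi1 :: "nat \<Rightarrow> nat \<Rightarrow> complex mat \<Rightarrow> complex mat" where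
  "phi1 p m M =
    (let b = xexp p M in
     if b = 0 then Sm p (Rfun p m (dpart p M))
     else if b = 1 then Sm p (Pfun p m (dpart p M)) * Xm p
     else (let y = (THE y. y \<in> {1..p-1} \<and> (y * b) mod p = 1);
               N = M ^\<^sub>m y
           in (Sm p (Pfun p m (dpart p N)) * Xm p) ^\<^sub>m b))"

end

theory Submission
  imports Defs "HOL-Analysis.Complex_Transcendental" "HOL-Computational_Algebra.Polynomial" "HOL-Number_Theory.Cong"
begin

lemma Sm_carrier[simp]: "Sm p \<xi> \<in> carrier_mat p p"
  by (simp add: Sm_def)
lemma Sm_dims[simp]: "dim_row (Sm p \<xi>) = p" "dim_col (Sm p \<xi>) = p"
  by (simp_all add: Sm_def)
lemma Sm_index[simp]: "i < p \<Longrightarrow> j < p \<Longrightarrow> Sm p \<xi> $$ (i,j) = (if i = j then \<xi> i else 0)"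
  by (simp add: Sm_def)
lemma Xm_carrier[simp]: "Xm p \<in> carrier_mat p p"
  by (simp add: Xm_def)
lemma Xm_dims[simp]: "dim_row (Xm p) = p" "dim_col (Xm p) = p"
  by (simp_all add: Xm_def)
lemma Xm_index[simp]: "i < p \<Longrightarrow> j < p \<Longrightarrow> Xm p $$ (i,j) = (if i = (j+1) mod p then 1 else 0)"
  by (simp add: Xm_def)

lemma Sm_mult_left:
  assumes B: "B \<in> carrier_mat p p" and i: "i < p" and j: "j < p"
  shows "(Sm p \<xi> * B) $$ (i,j) = \<xi> i * B $$ (i,j)"
proof -
  have "(Sm p \<xi> * B) $$ (i,j) = (\<Sum>k = 0..<p. Sm p \<xi> $$ (i,k) * B $$ (k,j))"
    using B i j by (simp add: index_mult_mat scalar_prod_def)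
  also have "\<dots> = (\<Sum>k = 0..<p. (if k = i then \<xi> i * B $$ (i,j) else 0))"
    using i by (intro sum.cong) auto
  also have "\<dots> = \<xi> i * B $$ (i,j)" using i by simp
  finally show ?thesis .
qed

lemma Sm_mult_right:
  assumes B: "B \<in> carrier_mat p p" and i: "i < p" and j: "j < p"
  shows "(B * Sm p \<xi>) $$ (i,j) = B $$ (i,j) * \<xi> j"
proof -
  have "(B * Sm p \<xi>) $$ (i,j) = (\<Sum>k = 0..<p. B $$ (i,k) * Sm p \<xi> $$ (k,j))"
    using B i j by (simp add: index_mult_mat scalar_prod_def)
  also have "\<dots> = (\<Sum>k = 0..<p. (if k = j then B $$ (i,j) * \<xi> j else 0))"
    using j by (intro sum.cong) auto
  also have "\<dots> = B $$ (i,j) * \<xi> j" using j by simp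
  finally show ?thesis .
qed

lemma Sm_mult: "Sm p \<xi> * Sm p \<eta> = Sm p (\<lambda>q. \<xi> q * \<eta> q)"
  by (rule eq_matI) (auto simp del: index_mult_mat simp add: index_mult_mat(2,3) simp: Sm_mult_left)

lemma Sm_one: "Sm p (\<lambda>_. 1) = 1\<^sub>m p"
  by (rule eq_matI) auto

lemma Sm_pow: "Sm p \<xi> ^\<^sub>m k = Sm p (\<lambda>q. \<xi> q ^ k)"
  by (induction k) (auto simp: Sm_one Sm_mult)

lemma Sm_eqD: "Sm p \<xi> = Sm p \<eta> \<Longrightarrow> q < p \<Longrightarrow> \<xi> q = \<eta> q"
  by (metis Sm_index)

lemma Sm_cong: "(\<And>q. q < p \<Longrightarrow> \<xi> q = \<eta> q) \<Longrightarrow> Sm p \<xi> = Sm p \<eta>"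
  by (rule eq_matI) auto

lemma Xm_pow_carrier[simp]: "Xm p ^\<^sub>m b \<in> carrier_mat p p"
  by (induction b) auto

lemma Xm_pow_index: "i < p \<Longrightarrow> j < p \<Longrightarrow> (Xm p ^\<^sub>m b) $$ (i,j) = (if i = (j+b) mod p then 1 else 0)"
proof (induction b arbitrary: i j)
  case 0
  then show ?case by simp
next
  case (Suc b)
  have "(Xm p ^\<^sub>m Suc b) $$ (i,j) = (\<Sum>k = 0..<p. (Xm p ^\<^sub>m b) $$ (i,k) * Xm p $$ (k,j))"
    using Suc.prems by (simp add: index_mult_mat scalar_prod_def)
  also have "\<dots> = (\<Sum>k = 0..<p. (if k = (j+1) mod p then (if i = (k+b) mod p then 1 else 0) else 0))"
    using Suc by (intro sum.cong) auto
  also have "\<dots> = (if i = ((j+1) mod p + b) mod p then 1 else 0)"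
    using Suc.prems by simp
  also have "((j+1) mod p + b) mod p = (j + Suc b) mod p"
    by (simp add: mod_add_left_eq)
  finally show ?case .
qed

lemma xexp_Sm:
  assumes p: "p > 1" and nz: "\<eta> 0 \<noteq> 0"
  shows "xexp p (Sm p \<eta>) = 0"
  unfolding xexp_def
proof (rule the_equality)
  show "0 < p \<and> (\<exists>\<xi>. Sm p \<eta> = Sm p \<xi> * Xm p ^\<^sub>m 0)"
    using p by (intro conjI exI[of _ \<eta>]) auto
next
  fix b assume "b < p \<and> (\<exists>\<xi>. Sm p \<eta> = Sm p \<xi> * Xm p ^\<^sub>m b)"
  then obtain \<xi> where b: "b < p" and e: "Sm p \<eta> = Sm p \<xi> * Xm p ^\<^sub>m b" by blast
  have "Sm p \<eta> $$ (0,0) = (Sm p \<xi> * Xm p ^\<^sub>m b) $$ (0,0)" using e by simp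
  also have "\<dots> = \<xi> 0 * (if 0 = b mod p then 1 else 0)"
    using p by (simp del: index_mult_mat add: index_mult_mat(2,3) Sm_mult_left Xm_pow_index)
  finally show "b = 0" using p nz b by (auto split: if_splits)
qed

lemma theta_cong: "(\<And>q. q < p \<Longrightarrow> \<xi> q = \<eta> q) \<Longrightarrow> theta p m \<xi> = theta p m \<eta>"
  unfolding theta_def by simp

lemma phi1_Sm:
  assumes p: "p > 1" and nz: "\<eta> 0 \<noteq> 0"
  shows "phi1 p m (Sm p \<eta>) = Sm p (Rfun p m \<eta>)"
proof -
  have x: "xexp p (Sm p \<eta>) = 0" using xexp_Sm assms by blast
  have "\<exists>\<zeta>. Sm p \<eta> = Sm p \<zeta> * Xm p ^\<^sub>m xexp p (Sm p \<eta>)"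
    using x by (intro exI[of _ \<eta>]) auto
  hence "Sm p \<eta> = Sm p (dpart p (Sm p \<eta>)) * Xm p ^\<^sub>m xexp p (Sm p \<eta>)"
    unfolding dpart_def by (rule someI_ex)
  hence "Sm p \<eta> = Sm p (dpart p (Sm p \<eta>))" using x by simp
  hence "theta p m (dpart p (Sm p \<eta>)) = theta p m \<eta>"
    by (intro theta_cong) (metis Sm_eqD)
  hence "Rfun p m (dpart p (Sm p \<eta>)) = Rfun p m \<eta>" by (simp add: Rfun_def)
  thus ?thesis unfolding phi1_def using x by simp
qed

lemma one_Tpow: "1\<^sub>m p \<in> Tpow p m"
proof -
  have "Sm p (\<lambda>_. 1) ^\<^sub>m (p^m) = Sm p (\<lambda>_. 1)" by (simp add: Sm_pow)
  thus ?thesis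
  unfolding Tpow_def Tset_def by (auto simp: Sm_one[symmetric] intro!: exI[of _ "\<lambda>_. 1"])
qed

lemma Xm_K: "p > 1 \<Longrightarrow> Xm p \<in> Kgrp p (Tpow p m)"
proof -
  assume p: "p > 1"
  have "1\<^sub>m p * Xm p ^\<^sub>m 1 \<in> Kgrp p (Tpow p m)" by (rule Kgrp.gen) (use p in \<open>auto simp: one_Tpow\<close>)
  thus ?thesis by simp
qed

lemma hyp_extract:
  assumes p: "p > 1" and T: "Sm p \<xi> \<in> Tpow p m" and C: "Sm p \<xi> ^\<^sub>m p \<in> center (Kgrp p (Tpow p m))"
  shows "\<forall>q<p. norm (\<xi> q) = 1" "(\<Prod>q<p. \<xi> q) = 1" "\<forall>q<p. \<xi> q ^ (p^m) = 1"
    "\<forall>q<p. \<xi> q ^ p = \<xi> 0 ^ p"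
proof -
  from T obtain \<zeta> where e: "Sm p \<xi> = Sm p \<zeta>" and n: "\<forall>q<p. norm (\<zeta> q) = 1"
    and pr: "(\<Prod>q<p. \<zeta> q) = 1" and pw: "Sm p \<xi> ^\<^sub>m (p^m) = 1\<^sub>m p"
    unfolding Tpow_def Tset_def by auto
  have eq: "\<And>q. q < p \<Longrightarrow> \<xi> q = \<zeta> q" using e Sm_eqD by metis
  show "\<forall>q<p. norm (\<xi> q) = 1" using n eq by simp
  show "(\<Prod>q<p. \<xi> q) = 1" using pr eq by simp
  show "\<forall>q<p. \<xi> q ^ (p^m) = 1"
    using pw by (auto simp: Sm_pow Sm_one[symmetric] dest: Sm_eqD)
  have comm: "Sm p (\<lambda>q. \<xi> q ^ p) * Xm p = Xm p * Sm p (\<lambda>q. \<xi> q ^ p)"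
    using C Xm_K[OF p, of m] unfolding center_def by (auto simp: Sm_pow)
  have step: "\<xi> ((q+1) mod p) ^ p = \<xi> q ^ p" if q: "q < p" for q
  proof -
    have "(Sm p (\<lambda>q. \<xi> q ^ p) * Xm p) $$ ((q+1) mod p, q) = (Xm p * Sm p (\<lambda>q. \<xi> q ^ p)) $$ ((q+1) mod p, q)"
      using comm by simp
    thus ?thesis using q p by (simp del: index_mult_mat add: index_mult_mat(2,3) Sm_mult_left Sm_mult_right)
  qed
  show "\<forall>q<p. \<xi> q ^ p = \<xi> 0 ^ p"
  proof (intro allI impI)
    fix q assume "q < p" thus "\<xi> q ^ p = \<xi> 0 ^ p"
    proof (induction q)
      case (Suc q) thus ?case using step[of q] by simp
    qed simp
  qed
qed

definition ee :: "real \<Rightarrow> complex" where "ee x = exp (2 * pi * \<i> * of_real x)"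

lemma ee_add: "ee (x + y) = ee x * ee y"
  unfolding ee_def by (simp add: distrib_left exp_add)

lemma ee_int: "ee (of_int n) = 1"
proof -
  have "2 * pi * \<i> * complex_of_real (of_int n) = (2 * of_int n * pi) * \<i>" by simp
  thus ?thesis unfolding ee_def using exp_integer_2pi[of "of_int n"] by (simp add: mult_ac)
qed

lemma ee_eq: "ee x = ee y \<longleftrightarrow> (\<exists>n::int. x = y + of_int n)"
proof
  assume "ee x = ee y"
  then obtain n :: int where n: "2 * pi * \<i> * of_real x = 2 * pi * \<i> * of_real y + complex_of_real (of_int (2*n) * pi) * \<i>"
    unfolding ee_def exp_eq by blast
  have "(2 * pi * \<i>) * (of_real x - of_real y - of_int n) = 0"
    using n by (simp add: algebra_simps)
  hence "complex_of_real x - of_real y - of_int n = 0" by simp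
  hence "complex_of_real x = complex_of_real (y + of_int n)" by (simp add: algebra_simps)
  hence "x = y + of_int n" using of_real_eq_iff by blast
  thus "\<exists>n::int. x = y + of_int n" by blast
next
  assume "\<exists>n::int. x = y + of_int n"
  then obtain n :: int where "x = y + of_int n" by blast
  thus "ee x = ee y" by (simp add: ee_add ee_int)
qed


lemma ee_zero: "ee 0 = 1" by (simp add: ee_def)

lemma ee_pow: "ee x ^ k = ee (of_nat k * x)"
  unfolding ee_def by (simp add: exp_of_nat_mult[symmetric] mult_ac)

lemma ee_prod: "finite A \<Longrightarrow> (\<Prod>q\<in>A. ee (f q)) = ee (\<Sum>q\<in>A. f q)"
  by (induction A rule: finite_induct) (auto simp: ee_add ee_zero)


lemma ee_frac:
  assumes k: "k > 0"
  shows "ee (of_int a / of_int k) = ee (of_int b / of_int k) \<longleftrightarrow> k dvd (a - b)"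
proof
  assume "ee (of_int a / of_int k) = ee (of_int b / of_int k)"
  then obtain n :: int where e: "of_int a / of_int k = (of_int b / of_int k :: real) + of_int n"
    unfolding ee_eq by blast
  have "(of_int a :: real) = (of_int b / of_int k + of_int n) * of_int k" 
    using k by (simp add: e[symmetric])
  also have "\<dots> = of_int b + of_int n * of_int k" using k by (simp add: distrib_right)
  finally have "a = b + n * k" by (metis of_int_add of_int_eq_iff of_int_mult)
  thus "k dvd a - b" by simp
next
  assume "k dvd a - b"
  then obtain n where an: "a = b + k * n" by (metis add.commute diff_add_cancel dvd_def)
  have "(of_int a / of_int k :: real) = (of_int b + of_int k * of_int n) / of_int k" by (simp add: an)
  also have "\<dots> = of_int b / of_int k + of_int n" using k by (simp add: add_divide_distrib)
  finally show "ee (of_int a / of_int k) = ee (of_int b / of_int k)" using ee_eq by blast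
qed

lemma root_unity:
  assumes n: "n > 0" and z: "z ^ n = 1"
  shows "\<exists>k::int. z = ee (of_int k / of_nat n)"
proof -
  have z0: "z \<noteq> 0" using z n by (cases "z = 0") (auto simp: power_0_left)
  define w where "w = Ln z"
  have ew: "exp w = z" using z0 by (simp add: w_def)
  have "exp (of_nat n * w) = 1" using ew z by (simp add: exp_of_nat_mult)
  then obtain k :: int where re: "Re (of_nat n * w) = 0" and im: "Im (of_nat n * w) = of_int (2 * k) * pi"
    unfolding exp_eq_1 by blast
  have nw: "of_nat n * w = 2 * pi * \<i> * of_real (of_int k)"
    using re im by (intro complex_eqI) auto
  have "w = (of_nat n * w) / of_nat n" using n by simp
  also have "\<dots> = 2 * pi * \<i> * of_real (of_int k / of_nat n)" unfolding nw by (simp add: divide_simps)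
  finally show ?thesis using ew unfolding ee_def by blast
qed

definition ev :: "nat \<Rightarrow> (nat \<Rightarrow> int) \<Rightarrow> int \<Rightarrow> int" where
  "ev p c x = (\<Sum>a<p. c a * x ^ a)"

lemma roots_mod_aux:
  fixes P :: "int poly"
  assumes pr: "prime p"
  shows "card S = n \<Longrightarrow> finite S \<Longrightarrow> (\<forall>r\<in>S. \<forall>s\<in>S. r \<noteq> s \<longrightarrow> \<not> int p dvd (r - s))
    \<Longrightarrow> degree P < card S \<Longrightarrow> (\<forall>r\<in>S. int p dvd poly P r) \<Longrightarrow> int p dvd coeff P i"
proof (induction n arbitrary: S P i)
  case 0
  then show ?case by simp
next
  case (Suc n)
  then obtain r where r: "r \<in> S" by fastforce
  show ?case
  proof (cases "n = 0")
    case True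
    hence "degree P = 0" using Suc by simp
    hence P: "P = [:coeff P 0:]" by (metis degree_0_id)
    have "poly [:coeff P 0:] r = coeff P 0" by simp
    hence "poly P r = coeff P 0" using P by metis
    hence "int p dvd coeff P 0" using Suc.prems(5) r by metis
    thus ?thesis by (cases i) (subst P, simp)+
  next
    case False
    define Q where "Q = synthetic_div P r"
    have PQ: "P = [:-r, 1:] * Q + [:poly P r:]" unfolding Q_def by (rule synthetic_div_correct'[symmetric])
    have pr': "prime (int p)" using pr by simp
    have cS: "card (S - {r}) = n" using Suc.prems r by simp
    have dQ: "degree Q < card (S - {r})" using Suc.prems(1,4) False cS
      unfolding Q_def degree_synthetic_div by simp
    have rP: "int p dvd poly P r" using Suc.prems(5) r by blast
    have "int p dvd poly Q s" if s: "s \<in> S - {r}" for s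
    proof -
      have "poly P s = (s - r) * poly Q s + poly P r" by (subst PQ) (simp add: algebra_simps)
      hence "int p dvd (s - r) * poly Q s" using Suc.prems(5) s rP
        by (metis DiffD1 dvd_add_left_iff)
      moreover have "\<not> int p dvd (s - r)" using Suc.prems(3) s r by blast
      ultimately show ?thesis using pr' prime_dvd_mult_iff by blast
    qed
    hence IH: "\<And>j. int p dvd coeff Q j"
      using Suc.IH[OF cS _ _ dQ] Suc.prems(2,3) by blast
    have "coeff P i = coeff ([:-r, 1:] * Q) i + coeff [:poly P r:] i" by (subst PQ) simp
    also have "\<dots> = - r * coeff Q i + (case i of 0 \<Rightarrow> 0 | Suc j \<Rightarrow> coeff Q j) + (if i = 0 then poly P r else 0)"
      by (simp add: mult_pCons_left coeff_pCons split: nat.splits)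
    finally show ?thesis using IH rP by (auto split: nat.splits)
  qed
qed

lemma vand:
  assumes pr: "prime p" and h: "\<forall>q<p. int p dvd ev p c (int q)" and a: "a < p"
  shows "int p dvd c a"
proof -
  define P where "P = (\<Sum>b<p. monom (c b) b)"
  have polyP: "poly P x = ev p c x" for x unfolding P_def ev_def by (simp add: poly_sum poly_monom)
  have coeffP: "coeff P i = (if i < p then c i else 0)" for i
    unfolding P_def by (simp add: coeff_sum coeff_monom)
  have p1: "p > 0" using pr prime_gt_0_nat by blast
  have "degree P \<le> p - 1" by (rule degree_le) (auto simp: coeffP)
  hence dP: "degree P < card (int ` {..<p})" using p1 by (simp add: card_image)
  have "int p dvd coeff P a"
  proof (rule roots_mod_aux[OF pr refl])
    show "\<forall>r\<in>int ` {..<p}. \<forall>s\<in>int ` {..<p}. r \<noteq> s \<longrightarrow> \<not> int p dvd r - s"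
    proof (intro ballI impI notI)
      fix r s assume r: "r \<in> int ` {..<p}" and s: "s \<in> int ` {..<p}" and rs: "r \<noteq> s" and d: "int p dvd r - s"
      have "\<bar>r - s\<bar> < int p" using r s by auto
      moreover have "r - s \<noteq> 0" using rs by simp
      ultimately show False using d dvd_imp_le_int[of "r-s" "int p"] by auto
    qed
    show "\<forall>r\<in>int ` {..<p}. int p dvd poly P r" using h by (auto simp: polyP)
  qed (use dP in auto)
  thus ?thesis using a by (simp add: coeffP)
qed

lemma ev_diff: "ev p c x - ev p c' x = ev p (\<lambda>a. c a - c' a) x"
  unfolding ev_def by (simp add: sum_subtractf algebra_simps)

lemma interp:
  assumes pr: "prime p"
  shows "\<exists>c. (\<forall>a<p. 0 \<le> c a \<and> c a < int p) \<and> (\<forall>q<p. ev p c (int q) mod int p = f q mod int p)"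
proof -
  have p0: "int p > 0" using pr prime_gt_0_nat by simp
  define A where "A = (PiE {..<p} (\<lambda>_. {0..<int p}) :: (nat \<Rightarrow> int) set)"
  define F where "F c = restrict (\<lambda>q. ev p c (int q) mod int p) {..<p}" for c
  have FA: "F ` A \<subseteq> A"
  proof
    fix x assume "x \<in> F ` A"
    then obtain c where x: "x = F c" by blast
    have "\<forall>q\<in>{..<p}. x q \<in> {0..<int p}"
      using p0 unfolding x F_def by (simp add: pos_mod_sign pos_mod_bound)
    moreover have "x \<in> extensional {..<p}" unfolding x F_def by simp
    ultimately show "x \<in> A" unfolding A_def by (simp add: PiE_iff)
  qed
  have inj: "inj_on F A"
  proof (rule inj_onI)
    fix c c' assume c: "c \<in> A" and c': "c' \<in> A" and e: "F c = F c'"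
    have "int p dvd ev p (\<lambda>a. c a - c' a) (int q)" if q: "q < p" for q
    proof -
      have "F c q = F c' q" using e by simp
      hence "ev p c (int q) mod int p = ev p c' (int q) mod int p" using q by (simp add: F_def)
      hence "int p dvd ev p c (int q) - ev p c' (int q)" by (simp add: mod_eq_dvd_iff)
      thus ?thesis by (metis ev_diff)
    qed
    hence d: "int p dvd c a - c' a" if "a < p" for a using vand[OF pr] that by blast
    show "c = c'"
    proof (rule ext)
      fix a show "c a = c' a"
      proof (cases "a < p")
        case True
        have "c a \<in> {0..<int p}" "c' a \<in> {0..<int p}" using c c' True unfolding A_def by (metis PiE_mem lessThan_iff)+
        hence ab: "\<bar>c a - c' a\<bar> < int p" by auto
        show ?thesis
        proof (rule ccontr)
          assume "c a \<noteq> c' a"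
          hence "c a - c' a \<noteq> 0" by simp
          hence "\<bar>int p\<bar> \<le> \<bar>c a - c' a\<bar>" using dvd_imp_le_int d[OF True] by blast
          thus False using ab by simp
        qed
      next
        case False
        thus ?thesis using c c' unfolding A_def by (auto simp: PiE_iff extensional_def)
      qed
    qed
  qed
  have fin: "finite A" unfolding A_def by (simp add: finite_PiE)
  have "F ` A = A" using FA inj fin by (intro card_subset_eq) (auto simp: card_image)
  moreover have g: "restrict (\<lambda>q. f q mod int p) {..<p} \<in> A" unfolding A_def using p0 by (simp add: PiE_iff pos_mod_sign pos_mod_bound)
  ultimately obtain c where c: "c \<in> A" and Fc: "F c = restrict (\<lambda>q. f q mod int p) {..<p}"
    by (metis imageE)
  show ?thesis
  proof (intro exI conjI allI impI)
    fix a assume "a < p" thus "0 \<le> c a" "c a < int p" using c unfolding A_def by (auto simp: PiE_iff)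
  next
    fix q assume q: "q < p"
    have "F c q = restrict (\<lambda>q. f q mod int p) {..<p} q" using Fc by simp
    thus "ev p c (int q) mod int p = f q mod int p" using q by (simp add: F_def)
  qed
qed

definition Dsum :: "nat \<Rightarrow> (nat \<Rightarrow> nat \<Rightarrow> nat) \<Rightarrow> nat \<Rightarrow> nat \<Rightarrow> int" where
  "Dsum p \<theta> j q = (\<Sum>a<p. int (\<theta> j a) * int q ^ a)"
definition Mint :: "nat \<Rightarrow> nat \<Rightarrow> (nat \<Rightarrow> nat \<Rightarrow> nat) \<Rightarrow> nat \<Rightarrow> int" where
  "Mint p m \<theta> q = (\<Sum>j\<in>{1..m}. int p ^ (m - j) * Dsum p \<theta> j q)"
definition Xs :: "nat \<Rightarrow> nat \<Rightarrow> (nat \<Rightarrow> nat \<Rightarrow> nat) \<Rightarrow> nat \<Rightarrow> complex" where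
  "Xs p m \<theta> q = (\<Sum>j\<in>{1..m}. (2 * pi * \<i> / of_nat (p ^ j)) *
                            (\<Sum>a<p. of_nat (\<theta> j a) * of_nat (q ^ a)))"
definition valid :: "nat \<Rightarrow> nat \<Rightarrow> (nat \<Rightarrow> nat \<Rightarrow> nat) \<Rightarrow> bool" where
  "valid p m \<theta> = ((\<forall>j a. \<theta> j a < p) \<and> (\<forall>j a. (j \<notin> {1..m} \<or> a \<ge> p) \<longrightarrow> \<theta> j a = 0))"

lemma Xs_eq:
  assumes p: "p > 0"
  shows "exp (Xs p m \<theta> q) = ee (of_int (Mint p m \<theta> q) / of_nat (p ^ m))"
proof -
  have D: "(\<Sum>a<p. of_nat (\<theta> j a) * of_nat (q ^ a)) = (of_int (Dsum p \<theta> j q) :: complex)" for j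
    unfolding Dsum_def by simp
  have "Xs p m \<theta> q = (\<Sum>j\<in>{1..m}. 2 * pi * \<i> * (of_int (int p ^ (m - j) * Dsum p \<theta> j q) / of_nat (p ^ m)))"
    unfolding Xs_def D
  proof (intro sum.cong refl)
    fix j assume j: "j \<in> {1..m}"
    have pm: "(of_nat (p ^ m) :: complex) = of_nat (p ^ (m - j)) * of_nat (p ^ j)"
      using j by (simp add: power_add[symmetric])
    have nz: "(of_nat (p ^ j) :: complex) \<noteq> 0" "(of_nat (p ^ (m - j)) :: complex) \<noteq> 0" using p by simp_all
    show "2 * pi * \<i> / of_nat (p ^ j) * of_int (Dsum p \<theta> j q) =
          2 * pi * \<i> * (of_int (int p ^ (m - j) * Dsum p \<theta> j q) / of_nat (p ^ m))"
      unfolding pm using nz p by (simp add: field_simps)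
  qed
  also have "\<dots> = 2 * pi * \<i> * (of_int (Mint p m \<theta> q) / of_nat (p ^ m))"
    unfolding Mint_def by (simp add: sum_distrib_left sum_divide_distrib)
  finally show ?thesis unfolding ee_def by simp
qed

lemma U':
  assumes pr: "prime p"
  shows "(\<forall>q<p. int p ^ m dvd (\<Sum>i<m. int p ^ i * ev p (E i) (int q))) \<Longrightarrow>
         (\<forall>i<m. \<forall>a<p. \<bar>E i a\<bar> < int p) \<Longrightarrow> i < m \<Longrightarrow> a < p \<Longrightarrow> E i a = 0"
proof (induction m arbitrary: E i)
  case 0
  then show ?case by simp
next
  case (Suc m)
  have split: "(\<Sum>i<Suc m. int p ^ i * ev p (E i) x) = ev p (E 0) x + int p * (\<Sum>i<m. int p ^ i * ev p (E (Suc i)) x)" for x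
    by (subst sum.lessThan_Suc_shift) (simp add: sum_distrib_left mult_ac)
  have d0: "int p dvd ev p (E 0) (int q)" if q: "q < p" for q
  proof -
    have "int p dvd int p ^ Suc m" by simp
    hence "int p dvd ev p (E 0) (int q) + int p * (\<Sum>i<m. int p ^ i * ev p (E (Suc i)) (int q))"
      using Suc.prems(1) q split by (metis dvd_trans)
    thus ?thesis by (simp add: dvd_add_left_iff)
  qed
  have E0: "E 0 a = 0" if a: "a < p" for a
  proof (rule ccontr)
    assume ne: "E 0 a \<noteq> 0"
    have "int p dvd E 0 a" using vand[OF pr] d0 a by blast
    hence "\<bar>int p\<bar> \<le> \<bar>E 0 a\<bar>" using ne dvd_imp_le_int by blast
    thus False using Suc.prems(2) a by fastforce
  qed
  have ev0: "ev p (E 0) x = 0" for x unfolding ev_def using E0 by simp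
  have "int p ^ m dvd (\<Sum>i<m. int p ^ i * ev p (E (Suc i)) (int q))" if q: "q < p" for q
  proof -
    have A: "int p ^ Suc m dvd (\<Sum>i<Suc m. int p ^ i * ev p (E i) (int q))" using Suc.prems(1) q by blast
    have "int p ^ Suc m dvd int p * (\<Sum>i<m. int p ^ i * ev p (E (Suc i)) (int q))"
      using A unfolding split ev0 add_0_left .
    hence "int p * int p ^ m dvd int p * (\<Sum>i<m. int p ^ i * ev p (E (Suc i)) (int q))"
      by (simp only: power_Suc)
    moreover have "int p \<noteq> 0" using pr by simp
    ultimately show ?thesis by simp
  qed
  hence IH: "\<And>i. i < m \<Longrightarrow> a < p \<Longrightarrow> E (Suc i) a = 0"
    using Suc.IH[of "\<lambda>i. E (Suc i)"] Suc.prems(2) by auto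
  show ?case using Suc.prems(3,4) E0 IH by (cases i) auto
qed

lemma Mint_diff:
  "Mint p m \<theta> q - Mint p m \<theta>' q = (\<Sum>i<m. int p ^ i * ev p (\<lambda>a. int (\<theta> (m - i) a) - int (\<theta>' (m - i) a)) (int q))"
proof -
  have "Mint p m \<theta> q - Mint p m \<theta>' q = (\<Sum>j\<in>{1..m}. int p ^ (m - j) * ev p (\<lambda>a. int (\<theta> j a) - int (\<theta>' j a)) (int q))"
    unfolding Mint_def Dsum_def ev_def by (simp add: sum_subtractf[symmetric] algebra_simps sum_distrib_left)
  also have "\<dots> = (\<Sum>i<m. int p ^ i * ev p (\<lambda>a. int (\<theta> (m - i) a) - int (\<theta>' (m - i) a)) (int q))"
    by (rule sum.reindex_bij_witness[of _ "\<lambda>i. m - i" "\<lambda>j. m - j"]) auto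
  finally show ?thesis .
qed

lemma theta_unique:
  assumes pr: "prime p" and v: "valid p m \<theta>" and v': "valid p m \<theta>'"
    and e: "\<forall>q<p. exp (Xs p m \<theta> q) = exp (Xs p m \<theta>' q)"
  shows "\<theta> = \<theta>'"
proof -
  have p0: "p > 0" using pr prime_gt_0_nat by blast
  have "int p ^ m dvd (\<Sum>i<m. int p ^ i * ev p (\<lambda>a. int (\<theta> (m - i) a) - int (\<theta>' (m - i) a)) (int q))"
    if q: "q < p" for q
  proof -
    have "ee (of_int (Mint p m \<theta> q) / of_int (int p ^ m)) = ee (of_int (Mint p m \<theta>' q) / of_int (int p ^ m))"
      using e q Xs_eq[OF p0] by simp
    hence "int p ^ m dvd Mint p m \<theta> q - Mint p m \<theta>' q" using ee_frac[of "int p ^ m"] p0 by simp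
    thus ?thesis by (simp add: Mint_diff)
  qed
  moreover have "\<forall>i<m. \<forall>a<p. \<bar>int (\<theta> (m - i) a) - int (\<theta>' (m - i) a)\<bar> < int p"
  proof -
    have ab: "\<And>x y. x < p \<Longrightarrow> y < p \<Longrightarrow> \<bar>int x - int y\<bar> < int p" by arith
    show ?thesis using v v' unfolding valid_def by (auto intro!: ab)
  qed
  ultimately have z: "\<And>i a. i < m \<Longrightarrow> a < p \<Longrightarrow> int (\<theta> (m - i) a) - int (\<theta>' (m - i) a) = 0"
    using U'[OF pr, of m "\<lambda>i a. int (\<theta> (m - i) a) - int (\<theta>' (m - i) a)"] by blast
  show ?thesis
  proof (intro ext)
    fix j a show "\<theta> j a = \<theta>' j a"
    proof (cases "j \<in> {1..m} \<and> a < p")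
      case True
      hence "int (\<theta> (m - (m - j)) a) - int (\<theta>' (m - (m - j)) a) = 0" using z[of "m - j" a] by auto
      moreover have "m - (m - j) = j" using True by auto
      ultimately show ?thesis by simp
    next
      case False
      thus ?thesis using v v' unfolding valid_def by auto
    qed
  qed
qed

lemma theta_eq:
  assumes pr: "prime p" and v: "valid p m \<theta>" and e: "\<forall>q<p. \<eta> q = exp (Xs p m \<theta> q)"
  shows "theta p m \<eta> = \<theta>"
  unfolding theta_def
proof (rule the_equality, goal_cases)
  case 1 show ?case using v e unfolding valid_def Xs_def by auto
next
  case (2 \<theta>')
  hence "valid p m \<theta>'" "\<forall>q<p. exp (Xs p m \<theta>' q) = exp (Xs p m \<theta> q)" using e unfolding valid_def Xs_def by auto
  thus ?case using theta_unique[OF pr _ v] by blast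
qed

definition thS :: "nat \<Rightarrow> (nat \<Rightarrow> int) \<Rightarrow> int \<Rightarrow> nat \<Rightarrow> nat \<Rightarrow> nat" where
  "thS p c t j a = (if j = 1 \<and> a < p then nat (c a) else if j = 2 \<and> a = 0 then nat t else 0)"

lemma thS_valid:
  assumes "\<forall>a<p. 0 \<le> c a \<and> c a < int p" "0 \<le> t" "t < int p" "m < 2 \<longrightarrow> t = 0" "m \<ge> 1" "p > 0"
  shows "valid p m (thS p c t)"
  using assms unfolding valid_def thS_def by (auto simp: nat_less_iff)

lemma thS_S:
  assumes "\<forall>a<p. 0 \<le> c a" "0 \<le> t" "p > 0"
  shows "(\<Sum>a<p. of_nat (thS p c t j a) * of_nat (q ^ a) :: complex) =
     (if j = 1 then of_int (ev p c (int q)) else 0) + (if j = 2 then of_int t else 0)"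
proof -
  consider "j = 1" | "j = 2" | "j \<noteq> 1 \<and> j \<noteq> 2" by blast
  thus ?thesis
  proof cases
    case 1
    have "(\<Sum>a<p. of_nat (thS p c t j a) * of_nat (q ^ a) :: complex) = (\<Sum>a<p. of_int (c a * int q ^ a))"
      using 1 assms by (intro sum.cong) (auto simp: thS_def of_nat_nat)
    thus ?thesis using 1 unfolding ev_def by simp
  next
    case 2
    have "(\<Sum>a<p. of_nat (thS p c t j a) * of_nat (q ^ a) :: complex) = (\<Sum>a<p. if a = 0 then of_int t else 0)"
      using 2 assms by (intro sum.cong) (auto simp: thS_def of_nat_nat)
    thus ?thesis using 2 assms by simp
  next
    case 3 thus ?thesis by (simp add: thS_def)
  qed
qed

lemma thS_exp:
  assumes "\<forall>a<p. 0 \<le> c a" "0 \<le> t" "m < 2 \<longrightarrow> t = 0" "m \<ge> 1" "p > 0"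
  shows "exp (Xs p m (thS p c t) q) = ee (of_int (ev p c (int q)) / real p + of_int t / real p ^ 2)"
proof -
  define A :: complex where "A = of_int (ev p c (int q))"
  define B :: complex where "B = of_int t"
  have "Xs p m (thS p c t) q = (\<Sum>j\<in>{1..m}. (if j = 1 then 2 * pi * \<i> / of_nat p * A else 0) +
                                            (if j = 2 then 2 * pi * \<i> / of_nat (p^2) * B else 0))"
    unfolding Xs_def thS_S[OF assms(1,2,5)] A_def B_def by (intro sum.cong) (auto simp: distrib_left)
  also have "\<dots> = 2 * pi * \<i> / of_nat p * A + (if 2 \<le> m then 2 * pi * \<i> / of_nat (p^2) * B else 0)"
    using assms(4) by (simp add: sum.distrib)
  also have "\<dots> = 2 * pi * \<i> / of_nat p * A + 2 * pi * \<i> / of_nat (p^2) * B"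
    using assms(3) by (auto simp: B_def)
  also have "\<dots> = 2 * pi * \<i> * complex_of_real (of_int (ev p c (int q)) / real p + of_int t / real p ^ 2)"
    unfolding A_def B_def by (simp add: field_simps)
  finally show ?thesis unfolding ee_def by simp
qed

lemma omega_ee: "omega p = ee (1 / real p)"
  unfolding omega_def ee_def by simp

lemma Rfun_thS:
  assumes th: "theta p m \<eta> = thS p c t" and p: "p > 1" and c: "c 0 \<ge> 0" "c 1 \<ge> 0" and t: "t \<ge> 0"
  shows "Rfun p m \<eta> q = ee (of_int (c 0 + c 1 * int q) / real p + of_int t / real p ^ 2)"
proof -
  have "Rfun p m \<eta> q = omega p ^ (nat (c 0) + nat (c 1) * q) * exp (2 * pi * \<i> * of_nat (nat t) / of_nat (p ^ 2))"
    unfolding Rfun_def th using p by (simp add: thS_def)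
  also have "omega p ^ (nat (c 0) + nat (c 1) * q) = ee (of_int (c 0 + c 1 * int q) / real p)"
    unfolding omega_ee ee_pow using c by simp
  also have "exp (2 * pi * \<i> * of_nat (nat t) / of_nat (p ^ 2)) = ee (of_int t / real p ^ 2)"
    unfolding ee_def using t by simp
  finally show ?thesis by (simp add: ee_add)
qed

lemma ee_key:
  assumes p: "p > 0" and d: "int p dvd A1 - (A2 + B2 div int p)" and b: "B1 = B2 mod int p"
  shows "ee (of_int A1 / real p + of_int B1 / real p ^ 2) = ee (of_int A2 / real p + of_int B2 / real p ^ 2)"
proof -
  obtain n where n: "A1 - (A2 + B2 div int p) = int p * n" using d by blast
  have B2: "B2 = int p * (B2 div int p) + B1" using b by simp
  have "A1 * int p + B1 = A2 * int p + B2 + n * int p ^ 2"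
    using n B2 by (simp add: algebra_simps power2_eq_square)
  hence "of_int A1 * real p + of_int B1 = of_int A2 * real p + of_int B2 + of_int n * real p ^ 2"
    by (metis (mono_tags, opaque_lifting) of_int_add of_int_mult of_int_of_nat_eq of_int_power)
  hence "of_int A1 / real p + of_int B1 / real p ^ 2 = of_int A2 / real p + of_int B2 / real p ^ 2 + of_int n"
    using p by (simp add: field_simps power2_eq_square)
  thus ?thesis using ee_eq by blast
qed

lemma exist:
  assumes pr: "prime p" and m: "m \<ge> 1"
    and r: "\<forall>q<p. \<eta> q ^ (p^m) = 1" and c0: "\<forall>q<p. \<eta> q ^ p = \<eta> 0 ^ p" and pd: "(\<Prod>q<p. \<eta> q) = 1"
  shows "\<exists>c t. (\<forall>a<p. 0 \<le> c a \<and> c a < int p) \<and> 0 \<le> t \<and> t < int p \<and> (m < 2 \<longrightarrow> t = 0) \<and>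
     (\<forall>q<p. \<eta> q = ee (of_int (ev p c (int q)) / real p + of_int t / real p ^ 2))"
proof -
  have p0: "p > 0" using pr prime_gt_0_nat by blast
  define P where "P = int p"
  have P0: "P > 0" using p0 by (simp add: P_def)
  have "\<forall>q\<in>{..<p}. \<exists>k::int. \<eta> q = ee (of_int k / of_nat (p ^ m))"
    using r root_unity[of "p^m"] p0 by auto
  then obtain N where N: "\<forall>q\<in>{..<p}. \<eta> q = ee (of_int (N q) / of_nat (p ^ m))"
    by (metis bchoice)
  have Nq: "\<eta> q = ee (of_int (N q) / of_int (P ^ m))" if "q < p" for q
    using N that by (simp add: P_def)
  have Pm0: "P ^ m > 0" using P0 by simp
  have Pm: "P ^ m = P * P ^ (m - 1)" using m by (metis Suc_diff_1 le_less_trans less_one not_less power_Suc)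
  have A: "P ^ (m - 1) dvd N q - N 0" if q: "q < p" for q
  proof -
    have "\<eta> q ^ p = \<eta> 0 ^ p" using c0 q by blast
    hence "ee (of_nat p * (of_int (N q) / of_int (P ^ m))) = ee (of_nat p * (of_int (N 0) / of_int (P ^ m)))"
      using Nq[OF q] Nq[of 0] p0 by (simp add: ee_pow)
    hence "ee (of_int (P * N q) / of_int (P ^ m)) = ee (of_int (P * N 0) / of_int (P ^ m))"
      by (simp add: P_def)
    hence "P ^ m dvd P * N q - P * N 0" using ee_frac[OF Pm0] by blast
    hence "P * P ^ (m - 1) dvd P * (N q - N 0)" using Pm by (simp add: right_diff_distrib)
    thus ?thesis using P0 by simp
  qed
  have B: "P ^ m dvd (\<Sum>q<p. N q)"
  proof -
    have "ee (of_int (\<Sum>q<p. N q) / of_int (P ^ m)) = ee (\<Sum>q<p. of_int (N q) / of_int (P ^ m))"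
      by (simp add: sum_divide_distrib)
    also have "\<dots> = (\<Prod>q<p. ee (of_int (N q) / of_int (P ^ m)))"
      by (rule ee_prod[symmetric]) simp
    also have "\<dots> = (\<Prod>q<p. \<eta> q)" by (rule prod.cong[OF refl]) (metis Nq lessThan_iff)
    finally have "ee (of_int (\<Sum>q<p. N q) / of_int (P ^ m)) = ee (of_int 0 / of_int (P ^ m))"
      using pd by (simp add: ee_zero)
    hence "P ^ m dvd (\<Sum>q<p. N q) - 0" using ee_frac[OF Pm0] by blast
    thus ?thesis by (simp only: diff_0_right)
  qed
  show ?thesis
  proof (cases "m = 1")
    case True
    obtain c where c: "\<forall>a<p. 0 \<le> c a \<and> c a < int p" and cm: "\<forall>q<p. ev p c (int q) mod int p = N q mod int p"
      using interp[OF pr] by blast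
    show ?thesis
    proof (intro exI[of _ c] exI[of _ 0] conjI allI impI)
      fix q assume q: "q < p"
      have "ee (of_int (ev p c (int q)) / real p + of_int 0 / real p ^ 2) = ee (of_int (N q) / real p + of_int 0 / real p ^ 2)"
        using cm q p0 by (intro ee_key) (auto simp: mod_eq_dvd_iff)
      thus "\<eta> q = ee (of_int (ev p c (int q)) / real p + of_int 0 / real p ^ 2)"
        using Nq[OF q] True by (simp add: P_def)
    qed (use c p0 in auto)
  next
    case False
    hence m2: "m \<ge> 2" using m by simp
    define g where "g q = (N q - N 0) div P ^ (m - 1)" for q
    have Ng: "N q = N 0 + P ^ (m - 1) * g q" if "q < p" for q
      using A[OF that] unfolding g_def by simp
    have "(\<Sum>q<p. N q) = (\<Sum>q<p. N 0 + P ^ (m - 1) * g q)" by (rule sum.cong[OF refl]) (metis Ng lessThan_iff)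
    also have "\<dots> = P * N 0 + P ^ (m - 1) * (\<Sum>q<p. g q)"
      by (simp add: sum.distrib sum_distrib_left P_def)
    finally have "P ^ m dvd P * N 0 + P ^ (m - 1) * (\<Sum>q<p. g q)" using B by simp
    moreover have "P ^ (m - 1) dvd P ^ m" by (simp add: le_imp_power_dvd)
    ultimately have "P ^ (m - 1) dvd P * N 0 + P ^ (m - 1) * (\<Sum>q<p. g q)" using dvd_trans by blast
    hence "P ^ (m - 1) dvd P * N 0" by (simp add: dvd_add_left_iff)
    moreover have "P ^ (m - 1) = P * P ^ (m - 2)"
    proof -
      have "m - 1 = Suc (m - 2)" using m2 by simp
      thus ?thesis by (simp only: power_Suc)
    qed
    ultimately have "P ^ (m - 2) dvd N 0" using P0 by simp
    then obtain h where h: "N 0 = P ^ (m - 2) * h" by blast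
    obtain c where c: "\<forall>a<p. 0 \<le> c a \<and> c a < int p"
      and cm: "\<forall>q<p. ev p c (int q) mod int p = (g q + h div P) mod int p"
      using interp[OF pr, of "\<lambda>q. g q + h div P"] by blast
    show ?thesis
    proof (intro exI[of _ c] exI[of _ "h mod P"] conjI allI impI)
      fix q assume q: "q < p"
      have "ee (of_int (ev p c (int q)) / real p + of_int (h mod P) / real p ^ 2) = ee (of_int (g q) / real p + of_int h / real p ^ 2)"
        using cm q p0 by (intro ee_key) (auto simp: mod_eq_dvd_iff P_def)
      also have "of_int (g q) / real p + of_int h / real p ^ 2 = of_int (N q) / of_int (P ^ m)"
      proof -
        have e1: "real_of_int (N q) = real p ^ (m - 2) * (of_int h + real p * of_int (g q))"
        proof -
          have "N q = P ^ (m - 2) * (h + P * g q)"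
            using Ng[OF q] h \<open>P ^ (m - 1) = P * P ^ (m - 2)\<close> by (simp add: algebra_simps)
          thus ?thesis by (simp add: P_def)
        qed
        have e2: "real_of_int (P ^ m) = real p ^ (m - 2) * real p ^ 2"
        proof -
          have mm: "m = (m - 2) + 2" using m2 by simp
          have "real_of_int (P ^ m) = real p ^ m" by (simp add: P_def)
          also have "\<dots> = real p ^ (m - 2) * real p ^ 2" by (metis mm power_add)
          finally show ?thesis .
        qed
        show ?thesis unfolding e1 e2 using p0 by (simp add: field_simps power2_eq_square)
      qed
      finally show "\<eta> q = ee (of_int (ev p c (int q)) / real p + of_int (h mod P) / real p ^ 2)"
        using Nq[OF q] by simp
    qed (use c P0 m2 in \<open>auto simp: P_def\<close>)
  qed
qed

theorem lemma5:
  fixes p m :: nat and \<xi> \<xi>' :: "nat \<Rightarrow> complex"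
  assumes "prime p" and "odd p" and "m \<ge> 1"
    and "Sm p \<xi> \<in> Tpow p m" and "Sm p \<xi>' \<in> Tpow p m"
    and "Sm p \<xi> ^\<^sub>m p \<in> center (Kgrp p (Tpow p m))"
    and "Sm p \<xi>' ^\<^sub>m p \<in> center (Kgrp p (Tpow p m))"
  shows "phi1 p m (Sm p \<xi> * Sm p \<xi>') = phi1 p m (Sm p \<xi>) * phi1 p m (Sm p \<xi>')"
proof -
  note pr = assms(1) and m = assms(3)
  have p1: "p > 1" using pr prime_gt_1_nat by blast
  have p0: "p > 0" using p1 by simp
  define P where "P = int p"
  have P0: "P > 0" using p0 by (simp add: P_def)
  note h1 = hyp_extract[OF p1 assms(4) assms(6)]
  note h2 = hyp_extract[OF p1 assms(5) assms(7)]
  obtain c t where c: "\<forall>a<p. 0 \<le> c a \<and> c a < int p" and t: "0 \<le> t" "t < int p" "m < 2 \<longrightarrow> t = 0"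
    and e: "\<forall>q<p. \<xi> q = ee (of_int (ev p c (int q)) / real p + of_int t / real p ^ 2)"
    using exist[OF pr m h1(3) h1(4) h1(2)] by blast
  obtain c' t' where c': "\<forall>a<p. 0 \<le> c' a \<and> c' a < int p" and t': "0 \<le> t'" "t' < int p" "m < 2 \<longrightarrow> t' = 0"
    and e': "\<forall>q<p. \<xi>' q = ee (of_int (ev p c' (int q)) / real p + of_int t' / real p ^ 2)"
    using exist[OF pr m h2(3) h2(4) h2(2)] by blast
  define s where "s = t + t'"
  define c'' where "c'' a = (c a + c' a + (if a = 0 then s div P else 0)) mod P" for a
  define t'' where "t'' = s mod P"
  have c'': "\<forall>a<p. 0 \<le> c'' a \<and> c'' a < int p" using P0 unfolding c''_def P_def by simp
  have t'': "0 \<le> t''" "t'' < int p" "m < 2 \<longrightarrow> t'' = 0"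
    using P0 t t' unfolding t''_def s_def P_def by auto
  have evc: "ev p c'' x mod P = (ev p c x + ev p c' x + s div P) mod P" for x
  proof -
    define F where "F a = c a + c' a + (if a = 0 then s div P else 0)" for a
    have "ev p c'' x mod P = (\<Sum>a<p. c'' a * x ^ a mod P) mod P"
      unfolding ev_def by (rule mod_sum_eq[symmetric])
    also have "\<dots> = (\<Sum>a<p. F a * x ^ a mod P) mod P"
      unfolding c''_def F_def by (simp only: mod_mult_left_eq)
    also have "\<dots> = (\<Sum>a<p. F a * x ^ a) mod P"
      by (rule mod_sum_eq)
    also have "(\<Sum>a<p. F a * x ^ a) = ev p c x + ev p c' x + (\<Sum>a<p. (if a = 0 then s div P else 0) * x ^ a)"
      unfolding ev_def F_def by (simp only: distrib_right sum.distrib)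
    also have "(\<Sum>a<p. (if a = 0 then s div P else 0) * x ^ a) = (\<Sum>a<p. if a = 0 then s div P else 0)"
      by (intro sum.cong) auto
    also have "\<dots> = s div P" using p0 by simp
    finally show ?thesis .
  qed
  have e'': "\<forall>q<p. \<xi> q * \<xi>' q = ee (of_int (ev p c'' (int q)) / real p + of_int t'' / real p ^ 2)"
  proof (intro allI impI)
    fix q assume q: "q < p"
    have "\<xi> q * \<xi>' q = ee (of_int (ev p c (int q)) / real p + of_int t / real p ^ 2) *
       ee (of_int (ev p c' (int q)) / real p + of_int t' / real p ^ 2)" using e e' q by simp
    also have "\<dots> = ee ((of_int (ev p c (int q)) / real p + of_int t / real p ^ 2) +
       (of_int (ev p c' (int q)) / real p + of_int t' / real p ^ 2))" by (rule ee_add[symmetric])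
    also have "(of_int (ev p c (int q)) / real p + of_int t / real p ^ 2) +
       (of_int (ev p c' (int q)) / real p + of_int t' / real p ^ 2) =
       of_int (ev p c (int q) + ev p c' (int q)) / real p + of_int s / real p ^ 2"
      by (simp add: s_def add_divide_distrib)
    also have "ee (of_int (ev p c (int q) + ev p c' (int q)) / real p + of_int s / real p ^ 2) = ee (of_int (ev p c'' (int q)) / real p + of_int t'' / real p ^ 2)"
      by (rule ee_key[symmetric]) (use p0 evc in \<open>auto simp: t''_def P_def mod_eq_dvd_iff\<close>)
    finally show "\<xi> q * \<xi>' q = ee (of_int (ev p c'' (int q)) / real p + of_int t'' / real p ^ 2)" .
  qed
  have cn: "\<forall>a<p. 0 \<le> c a" "\<forall>a<p. 0 \<le> c' a" "\<forall>a<p. 0 \<le> c'' a" using c c' c'' by auto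
  have "\<forall>q<p. \<xi> q = exp (Xs p m (thS p c t) q)"
    using e by (simp add: thS_exp[OF cn(1) t(1) t(3) m p0])
  hence th: "theta p m \<xi> = thS p c t" by (rule theta_eq[OF pr thS_valid[OF c t m p0]])
  have "\<forall>q<p. \<xi>' q = exp (Xs p m (thS p c' t') q)"
    using e' by (simp add: thS_exp[OF cn(2) t'(1) t'(3) m p0])
  hence th': "theta p m \<xi>' = thS p c' t'" by (rule theta_eq[OF pr thS_valid[OF c' t' m p0]])
  have "\<forall>q<p. (\<lambda>q. \<xi> q * \<xi>' q) q = exp (Xs p m (thS p c'' t'') q)"
    using e'' by (simp add: thS_exp[OF cn(3) t''(1) t''(3) m p0])
  hence th'': "theta p m (\<lambda>q. \<xi> q * \<xi>' q) = thS p c'' t''" by (rule theta_eq[OF pr thS_valid[OF c'' t'' m p0]])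
  have "norm (\<xi> 0) = 1" "norm (\<xi>' 0) = 1" using h1(1) h2(1) p0 by blast+
  hence nz: "\<xi> 0 \<noteq> 0" "\<xi>' 0 \<noteq> 0" by auto
  have "phi1 p m (Sm p \<xi> * Sm p \<xi>') = Sm p (Rfun p m (\<lambda>q. \<xi> q * \<xi>' q))"
    unfolding Sm_mult using phi1_Sm[OF p1] nz by simp
  also have "\<dots> = Sm p (\<lambda>q. Rfun p m \<xi> q * Rfun p m \<xi>' q)"
  proof (rule Sm_cong)
    fix q assume q: "q < p"
    have c01: "0 \<le> c 0" "0 \<le> c 1" "0 \<le> c' 0" "0 \<le> c' 1" "0 \<le> c'' 0" "0 \<le> c'' 1" using c c' c'' p1 by auto
    have "Rfun p m \<xi> q * Rfun p m \<xi>' q = ee (of_int (c 0 + c 1 * int q) / real p + of_int t / real p ^ 2) *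
       ee (of_int (c' 0 + c' 1 * int q) / real p + of_int t' / real p ^ 2)"
      by (simp only: Rfun_thS[OF th p1 c01(1,2) t(1)] Rfun_thS[OF th' p1 c01(3,4) t'(1)])
    also have "\<dots> = ee ((of_int (c 0 + c 1 * int q) / real p + of_int t / real p ^ 2) +
       (of_int (c' 0 + c' 1 * int q) / real p + of_int t' / real p ^ 2))" by (rule ee_add[symmetric])
    also have "(of_int (c 0 + c 1 * int q) / real p + of_int t / real p ^ 2) +
       (of_int (c' 0 + c' 1 * int q) / real p + of_int t' / real p ^ 2) =
       of_int (c 0 + c 1 * int q + (c' 0 + c' 1 * int q)) / real p + of_int s / real p ^ 2"
      by (simp add: s_def add_divide_distrib)
    also have "ee (of_int (c 0 + c 1 * int q + (c' 0 + c' 1 * int q)) / real p + of_int s / real p ^ 2) = ee (of_int (c'' 0 + c'' 1 * int q) / real p + of_int t'' / real p ^ 2)"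
    proof (rule ee_key[symmetric, OF p0])
      show "t'' = s mod int p" by (simp add: t''_def P_def)
      have "[c'' 0 = c 0 + c' 0 + s div P] (mod P)" unfolding c''_def by (simp add: cong_def)
      moreover have "[c'' 1 = c 1 + c' 1] (mod P)" unfolding c''_def by (simp add: cong_def)
      ultimately have "[c'' 0 + c'' 1 * int q = (c 0 + c' 0 + s div P) + (c 1 + c' 1) * int q] (mod P)"
        by (intro cong_add cong_mult cong_refl)
      thus "int p dvd c'' 0 + c'' 1 * int q - (c 0 + c 1 * int q + (c' 0 + c' 1 * int q) + s div int p)"
        unfolding P_def cong_iff_dvd_diff by (simp add: algebra_simps)
    qed
    also have "\<dots> = Rfun p m (\<lambda>q. \<xi> q * \<xi>' q) q"
      using Rfun_thS[OF th'' p1 c01(5,6) t''(1)] by simp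
    finally show "Rfun p m (\<lambda>q. \<xi> q * \<xi>' q) q = Rfun p m \<xi> q * Rfun p m \<xi>' q" by simp
  qed
  also have "\<dots> = Sm p (Rfun p m \<xi>) * Sm p (Rfun p m \<xi>')" by (simp add: Sm_mult)
  also have "\<dots> = phi1 p m (Sm p \<xi>) * phi1 p m (Sm p \<xi>')" using phi1_Sm[OF p1] nz by simp
  finally show ?thesis .
qed

end
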